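(* Let $(V,\tau)$ be a topological mixed lattice space. (a) If $A\subseteq V$ is balanced and absorbing, then $MF_1(A)=-MF_2(A)$, and the set $B=MF_1(A)+MF_2(A)$ is balanced and absorbing and has both of the following properties: ($y\in B$ and $0\le x\preccurlyeq y$) implies $x\in B$; ($y\in B$ and $0\preccurlyeq x\le y$) implies $x\in B$. If in addition $A$ is convex, then $MF_1(A)$, $MF_2(A)$ and $B$ are convex. (b) If $\tau$ is locally mixed-full, then every neighborhood of zero contains a balanced absorbing neighborhood $W$ of zero such that ($y\in W$, $0\le x\preccurlyeq y$) implies $x\in W$ and ($y\in W$, $0\preccurlyeq x\le y$) implies $x\in W$. If $\tau$ is moreover locally convex, $W$ can additionally be chosen convex.
   Context: A mixed lattice vector space $(V,\le,\preccurlyeq)$ is a real vector space $V$ with two partial orderings $\le$ (initial order) and $\preccurlyeq$ (specific order), each making $V$ a partially ordered vector space, with positive cones $V_p=\{x:0\le x\}$, $V_{sp}=\{x:0\preccurlyeq x\}$, such that: (1) for all $x,y$ the elements $x\curlyvee y=\min\{w: w\succcurlyeq x,\ w\ge y\}$ and $x\curlywedge y=\max\{w: w\preccurlyeq x,\ w\le y\}$ exist (min/max with respect to $\le$); (2) $x\preccurlyeq y$ implies $x\le y$; (3) $x\curlyvee y, x\curlywedge y\in V_{sp}$ whenever $x,y\in V_{sp}$. A topological mixed lattice space is such a $V$ with a vector topology $\tau$ for which $(x,y)\mapsto x\curlyvee y$ and $(x,y)\mapsto x\curlywedge y$ are continuous $V\times V\to V$ (product topology). For $A\subseteq V$: $MF_1(A)=\{y: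 x\preccurlyeq y\le z \text{ for some } x,z\in A\}$, $MF_2(A)=\{y: x\le y\preccurlyeq z \text{ for some } x,z\in A\}$. A vector topology is locally mixed-full if every neighborhood of zero contains a neighborhood $W$ of zero such that $y\in W$ and $0\preccurlyeq x\le y$ imply $x\in W$. *)

theory Defs
  imports "HOL-Analysis.Analysis"
begin

definition ordered_vs :: "('a::real_vector \<Rightarrow> 'a \<Rightarrow> bool) \<Rightarrow> bool" where
  "ordered_vs le \<longleftrightarrow>
     (\<forall>x. le x x) \<and>
     (\<forall>x y. le x y \<and> le y x \<longrightarrow> x = y) \<and>
     (\<forall>x y z. le x y \<and> le y z \<longrightarrow> le x z) \<and>
     (\<forall>x y z. le x y \<longrightarrow> le (x + z) (y + z)) \<and>
     (\<forall>x y (c::real). le x y \<and> 0 \<le> c \<longrightarrow> le (c *\<^sub>R x) (c *\<^sub>R y))"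

definition is_least_wrt :: "('a \<Rightarrow> 'a \<Rightarrow> bool) \<Rightarrow> 'a set \<Rightarrow> 'a \<Rightarrow> bool" where
  "is_least_wrt le S w \<longleftrightarrow> w \<in> S \<and> (\<forall>v\<in>S. le w v)"

definition is_greatest_wrt :: "('a \<Rightarrow> 'a \<Rightarrow> bool) \<Rightarrow> 'a set \<Rightarrow> 'a \<Rightarrow> bool" where
  "is_greatest_wrt le S w \<longleftrightarrow> w \<in> S \<and> (\<forall>v\<in>S. le v w)"

definition msup :: "('a \<Rightarrow> 'a \<Rightarrow> bool) \<Rightarrow> ('a \<Rightarrow> 'a \<Rightarrow> bool) \<Rightarrow> 'a \<Rightarrow> 'a \<Rightarrow> 'a" where
  "msup le sle x y = (THE w. is_least_wrt le {w. sle x w \<and> le y w} w)"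

definition minf :: "('a \<Rightarrow> 'a \<Rightarrow> bool) \<Rightarrow> ('a \<Rightarrow> 'a \<Rightarrow> bool) \<Rightarrow> 'a \<Rightarrow> 'a \<Rightarrow> 'a" where
  "minf le sle x y = (THE w. is_greatest_wrt le {w. sle w x \<and> le w y} w)"

(* le = initial order \<le>, sle = specific order \<preccurlyeq> *)
definition mixed_lattice_vs ::
  "('a::real_vector \<Rightarrow> 'a \<Rightarrow> bool) \<Rightarrow> ('a \<Rightarrow> 'a \<Rightarrow> bool) \<Rightarrow> bool" where
  "mixed_lattice_vs le sle \<longleftrightarrow>
     ordered_vs le \<and> ordered_vs sle \<and>
     (\<forall>x y. \<exists>w. is_least_wrt le {w. sle x w \<and> le y w} w) \<and>
     (\<forall>x y. \<exists>w. is_greatest_wrt le {w. sle w x \<and> le w y} w) \<and>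
     (\<forall>x y. sle x y \<longrightarrow> le x y) \<and>
     (\<forall>x y. sle 0 x \<and> sle 0 y \<longrightarrow> sle 0 (msup le sle x y) \<and> sle 0 (minf le sle x y))"

definition vector_topology :: "'a::real_vector topology \<Rightarrow> bool" where
  "vector_topology T \<longleftrightarrow>
     topspace T = UNIV \<and>
     continuous_map (prod_topology T T) T (\<lambda>(x, y). x + y) \<and>
     continuous_map (prod_topology (euclidean :: real topology) T) T (\<lambda>(c, x). c *\<^sub>R x)"

definition top_mixed_lattice_space ::
  "('a::real_vector \<Rightarrow> 'a \<Rightarrow> bool) \<Rightarrow> ('a \<Rightarrow> 'a \<Rightarrow> bool) \<Rightarrow> 'a topology \<Rightarrow> bool" where
  "top_mixed_lattice_space le sle T \<longleftrightarrow>
     mixed_lattice_vs le sle \<and> vector_topology T \<and>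
     continuous_map (prod_topology T T) T (\<lambda>(x, y). msup le sle x y) \<and>
     continuous_map (prod_topology T T) T (\<lambda>(x, y). minf le sle x y)"

definition nhd0 :: "'a::real_vector topology \<Rightarrow> 'a set \<Rightarrow> bool" where
  "nhd0 T N \<longleftrightarrow> (\<exists>U. openin T U \<and> 0 \<in> U \<and> U \<subseteq> N)"

definition balanced :: "'a::real_vector set \<Rightarrow> bool" where
  "balanced A \<longleftrightarrow> (\<forall>x\<in>A. \<forall>c::real. \<bar>c\<bar> \<le> 1 \<longrightarrow> c *\<^sub>R x \<in> A)"

definition absorbing :: "'a::real_vector set \<Rightarrow> bool" where
  "absorbing A \<longleftrightarrow> (\<forall>x. \<exists>t>0. \<forall>c::real. \<bar>c\<bar> \<le> t \<longrightarrow> c *\<^sub>R x \<in> A)"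

definition MF1 :: "('a \<Rightarrow> 'a \<Rightarrow> bool) \<Rightarrow> ('a \<Rightarrow> 'a \<Rightarrow> bool) \<Rightarrow> 'a set \<Rightarrow> 'a set" where
  "MF1 le sle A = {y. \<exists>x\<in>A. \<exists>z\<in>A. sle x y \<and> le y z}"

definition MF2 :: "('a \<Rightarrow> 'a \<Rightarrow> bool) \<Rightarrow> ('a \<Rightarrow> 'a \<Rightarrow> bool) \<Rightarrow> 'a set \<Rightarrow> 'a set" where
  "MF2 le sle A = {y. \<exists>x\<in>A. \<exists>z\<in>A. le x y \<and> sle y z}"

definition setsum :: "'a::plus set \<Rightarrow> 'a set \<Rightarrow> 'a set" where
  "setsum A B = {a + b | a b. a \<in> A \<and> b \<in> B}"

definition locally_mixed_full ::
  "('a::real_vector \<Rightarrow> 'a \<Rightarrow> bool) \<Rightarrow> ('a \<Rightarrow> 'a \<Rightarrow> bool) \<Rightarrow> 'a topology \<Rightarrow> bool" where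
  "locally_mixed_full le sle T \<longleftrightarrow>
     (\<forall>N. nhd0 T N \<longrightarrow> (\<exists>W. nhd0 T W \<and> W \<subseteq> N \<and>
        (\<forall>x y. y \<in> W \<and> sle 0 x \<and> le x y \<longrightarrow> x \<in> W)))"

definition locally_convex_top :: "'a::real_vector topology \<Rightarrow> bool" where
  "locally_convex_top T \<longleftrightarrow> (\<forall>N. nhd0 T N \<longrightarrow> (\<exists>W. nhd0 T W \<and> W \<subseteq> N \<and> convex W))"

end

theory Submission
  imports Defs
begin


lemma ovs_refl: "ordered_vs le \<Longrightarrow> le x x" by (simp add: ordered_vs_def)
lemma ovs_trans: "ordered_vs le \<Longrightarrow> le x y \<Longrightarrow> le y z \<Longrightarrow> le x z"
  unfolding ordered_vs_def by blast
lemma ovs_addr: "ordered_vs le \<Longrightarrow> le x y \<Longrightarrow> le (x + z) (y + z)"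
  unfolding ordered_vs_def by blast
lemma ovs_scale: "ordered_vs le \<Longrightarrow> le x y \<Longrightarrow> 0 \<le> (c::real) \<Longrightarrow> le (c *\<^sub>R x) (c *\<^sub>R y)"
  unfolding ordered_vs_def by blast
lemma ovs_cong: "le x y \<Longrightarrow> x = x' \<Longrightarrow> y = y' \<Longrightarrow> le x' y'" by simp

lemma ovs_add: assumes "ordered_vs le" "le x y" "le x' y'" shows "le (x + x') (y + y')"
proof -
  have "le (x + x') (y + x')" using ovs_addr[OF assms(1,2)] .
  moreover have "le (x' + y) (y' + y)" using ovs_addr[OF assms(1,3)] .
  hence "le (y + x') (y + y')" by (simp add: add.commute)
  ultimately show ?thesis using ovs_trans[OF assms(1)] by blast
qed

lemma ovs_neg: assumes "ordered_vs le" "le x y" shows "le (-y) (-x)"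
  using ovs_addr[OF assms, of "-x-y"] by (simp add: algebra_simps)

lemma ovs_comb: assumes "ordered_vs le" "le a b" "le c d" "0 \<le> u" "0 \<le> v"
  shows "le (u *\<^sub>R a + v *\<^sub>R c) (u *\<^sub>R b + v *\<^sub>R d)"
  using ovs_add[OF assms(1) ovs_scale[OF assms(1,2,4)] ovs_scale[OF assms(1,3,5)]] .

lemma bal_neg: "balanced A \<Longrightarrow> x \<in> A \<Longrightarrow> -x \<in> A"
  unfolding balanced_def by (metis abs_minus_cancel abs_one order_refl scaleR_minus1_left)

lemma MF1_neg: assumes "ordered_vs le" "ordered_vs sle" "balanced A" "y \<in> MF1 le sle A"
  shows "-y \<in> MF2 le sle A"
proof -
  from assms(4) obtain x z where "x \<in> A" "z \<in> A" "sle x y" "le y z" unfolding MF1_def by blast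
  moreover have "le (-z) (-y)" "sle (-y) (-x)" "-x \<in> A" "-z \<in> A"
    using calculation bal_neg[OF assms(3)] ovs_neg[OF assms(1)] ovs_neg[OF assms(2)] by auto
  ultimately show ?thesis unfolding MF2_def by blast
qed

lemma MF2_neg: assumes "ordered_vs le" "ordered_vs sle" "balanced A" "y \<in> MF2 le sle A"
  shows "-y \<in> MF1 le sle A"
proof -
  from assms(4) obtain x z where "x \<in> A" "z \<in> A" "le x y" "sle y z" unfolding MF2_def by blast
  moreover have "sle (-z) (-y)" "le (-y) (-x)" "-x \<in> A" "-z \<in> A"
    using calculation bal_neg[OF assms(3)] ovs_neg[OF assms(1)] ovs_neg[OF assms(2)] by auto
  ultimately show ?thesis unfolding MF1_def by blast
qed

lemma bal_scale: "balanced A \<Longrightarrow> x \<in> A \<Longrightarrow> 0 \<le> c \<Longrightarrow> c \<le> 1 \<Longrightarrow> c *\<^sub>R x \<in> A"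
  unfolding balanced_def by auto

lemma MF1_scale: assumes "ordered_vs le" "ordered_vs sle" "balanced A" "y \<in> MF1 le sle A"
  "0 \<le> c" "c \<le> 1"
  shows "c *\<^sub>R y \<in> MF1 le sle A"
proof -
  from assms(4) obtain x z where "x \<in> A" "z \<in> A" "sle x y" "le y z" unfolding MF1_def by blast
  moreover have "c *\<^sub>R x \<in> A" "c *\<^sub>R z \<in> A" "sle (c *\<^sub>R x) (c *\<^sub>R y)" "le (c *\<^sub>R y) (c *\<^sub>R z)"
    using calculation bal_scale[OF assms(3) _ assms(5,6)] ovs_scale[OF assms(1) _ assms(5)] ovs_scale[OF assms(2) _ assms(5)] by auto
  ultimately show ?thesis unfolding MF1_def by blast
qed

lemma MF2_scale: assumes "ordered_vs le" "ordered_vs sle" "balanced A" "y \<in> MF2 le sle A"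
  "0 \<le> c" "c \<le> 1"
  shows "c *\<^sub>R y \<in> MF2 le sle A"
proof -
  from assms(4) obtain x z where "x \<in> A" "z \<in> A" "le x y" "sle y z" unfolding MF2_def by blast
  moreover have "c *\<^sub>R x \<in> A" "c *\<^sub>R z \<in> A" "le (c *\<^sub>R x) (c *\<^sub>R y)" "sle (c *\<^sub>R y) (c *\<^sub>R z)"
    using calculation bal_scale[OF assms(3) _ assms(5,6)] ovs_scale[OF assms(1) _ assms(5)] ovs_scale[OF assms(2) _ assms(5)] by auto
  ultimately show ?thesis unfolding MF2_def by blast
qed

lemma MF1_convex: assumes "ordered_vs le" "ordered_vs sle" "convex A"
  shows "convex (MF1 le sle A)"
  unfolding convex_def
proof (intro ballI allI impI)
  fix y1 y2 and u v :: real
  assume "y1 \<in> MF1 le sle A" "y2 \<in> MF1 le sle A" "0 \<le> u" "0 \<le> v" "u + v = 1"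
  then obtain x1 z1 x2 z2 where h: "x1 \<in> A" "z1 \<in> A" "sle x1 y1" "le y1 z1"
    "x2 \<in> A" "z2 \<in> A" "sle x2 y2" "le y2 z2" unfolding MF1_def by blast
  have "u *\<^sub>R x1 + v *\<^sub>R x2 \<in> A" "u *\<^sub>R z1 + v *\<^sub>R z2 \<in> A"
    using assms(3) h `0 \<le> u` `0 \<le> v` `u+v=1` unfolding convex_def by auto
  then show "u *\<^sub>R y1 + v *\<^sub>R y2 \<in> MF1 le sle A" unfolding MF1_def
    using ovs_comb[OF assms(1) h(4) h(8) `0 \<le> u` `0 \<le> v`] ovs_comb[OF assms(2) h(3) h(7) `0 \<le> u` `0 \<le> v`]
    by blast
qed

lemma MF2_convex: assumes "ordered_vs le" "ordered_vs sle" "convex A"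
  shows "convex (MF2 le sle A)"
  unfolding convex_def
proof (intro ballI allI impI)
  fix y1 y2 and u v :: real
  assume "y1 \<in> MF2 le sle A" "y2 \<in> MF2 le sle A" "0 \<le> u" "0 \<le> v" "u + v = 1"
  then obtain x1 z1 x2 z2 where h: "x1 \<in> A" "z1 \<in> A" "le x1 y1" "sle y1 z1"
    "x2 \<in> A" "z2 \<in> A" "le x2 y2" "sle y2 z2" unfolding MF2_def by blast
  have "u *\<^sub>R x1 + v *\<^sub>R x2 \<in> A" "u *\<^sub>R z1 + v *\<^sub>R z2 \<in> A"
    using assms(3) h `0 \<le> u` `0 \<le> v` `u+v=1` unfolding convex_def by auto
  then show "u *\<^sub>R y1 + v *\<^sub>R y2 \<in> MF2 le sle A" unfolding MF2_def
    using ovs_comb[OF assms(1) h(3) h(7) `0 \<le> u` `0 \<le> v`] ovs_comb[OF assms(2) h(4) h(8) `0 \<le> u` `0 \<le> v`]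
    by blast
qed

lemma setsum_convex: assumes "convex A" "convex (B::'a::real_vector set)" shows "convex (setsum A B)"
  unfolding convex_def setsum_def
proof (safe)
  fix u v :: real and a1 b1 a2 b2
  assume h: "0 \<le> u" "0 \<le> v" "u + v = 1" "a1 \<in> A" "b1 \<in> B" "a2 \<in> A" "b2 \<in> B"
  have "u *\<^sub>R (a1 + b1) + v *\<^sub>R (a2 + b2) = (u *\<^sub>R a1 + v *\<^sub>R a2) + (u *\<^sub>R b1 + v *\<^sub>R b2)"
    by (simp add: algebra_simps)
  moreover have "u *\<^sub>R a1 + v *\<^sub>R a2 \<in> A" "u *\<^sub>R b1 + v *\<^sub>R b2 \<in> B"
    using assms h unfolding convex_def by auto
  ultimately show "\<exists>a b. u *\<^sub>R (a1 + b1) + v *\<^sub>R (a2 + b2) = a + b \<and> a \<in> A \<and> b \<in> B" by blast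
qed

lemma partA:
  assumes ol: "ordered_vs le" and os: "ordered_vs sle" and bA: "balanced A" and aA: "absorbing A"
  shows "MF1 le sle A = uminus ` MF2 le sle A \<and>
            balanced (setsum (MF1 le sle A) (MF2 le sle A)) \<and>
            absorbing (setsum (MF1 le sle A) (MF2 le sle A)) \<and>
            (\<forall>x y. y \<in> setsum (MF1 le sle A) (MF2 le sle A) \<and> le 0 x \<and> sle x y
                   \<longrightarrow> x \<in> setsum (MF1 le sle A) (MF2 le sle A)) \<and>
            (\<forall>x y. y \<in> setsum (MF1 le sle A) (MF2 le sle A) \<and> sle 0 x \<and> le x y
                   \<longrightarrow> x \<in> setsum (MF1 le sle A) (MF2 le sle A)) \<and>
            (convex A \<longrightarrow> convex (MF1 le sle A) \<and> convex (MF2 le sle A) \<and>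
                          convex (setsum (MF1 le sle A) (MF2 le sle A)))"
proof (intro conjI allI impI)
  let ?M1 = "MF1 le sle A" and ?M2 = "MF2 le sle A" and ?B = "setsum (MF1 le sle A) (MF2 le sle A)"
  have n1: "\<And>y. y \<in> ?M1 \<Longrightarrow> -y \<in> ?M2" using MF1_neg[OF ol os bA] .
  have n2: "\<And>y. y \<in> ?M2 \<Longrightarrow> -y \<in> ?M1" using MF2_neg[OF ol os bA] .
  show "?M1 = uminus ` ?M2"
  proof
    show "?M1 \<subseteq> uminus ` ?M2" using n1 by (metis image_eqI minus_minus subsetI)
    show "uminus ` ?M2 \<subseteq> ?M1" using n2 by auto
  qed
  have zA: "0 \<in> A"
  proof -
    obtain t where "t > 0" "\<forall>c::real. \<bar>c\<bar> \<le> t \<longrightarrow> c *\<^sub>R (0::'a) \<in> A" using aA unfolding absorbing_def by blast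
    then show ?thesis by (metis abs_zero less_imp_le scaleR_zero_left)
  qed
  have AM1: "A \<subseteq> ?M1" unfolding MF1_def using ovs_refl[OF ol] ovs_refl[OF os] by auto
  have zM2: "0 \<in> ?M2" unfolding MF2_def using zA ovs_refl[OF ol, of 0] ovs_refl[OF os, of 0] by auto
  have AB: "A \<subseteq> ?B" unfolding setsum_def using AM1 zM2 by force
  show "balanced ?B" unfolding balanced_def
  proof (intro ballI allI impI)
    fix y and c :: real assume "y \<in> ?B" "\<bar>c\<bar> \<le> 1"
    then obtain a b where ab: "y = a + b" "a \<in> ?M1" "b \<in> ?M2" unfolding setsum_def by blast
    show "c *\<^sub>R y \<in> ?B"
    proof (cases "0 \<le> c")
      case True
      then have "c *\<^sub>R a \<in> ?M1" "c *\<^sub>R b \<in> ?M2"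
        using MF1_scale[OF ol os bA ab(2)] MF2_scale[OF ol os bA ab(3)] `\<bar>c\<bar> \<le> 1` by auto
      then show ?thesis unfolding setsum_def ab(1) by (auto simp: scaleR_right_distrib)
    next
      case False
      have "0 \<le> \<bar>c\<bar>" by simp
      then have "\<bar>c\<bar> *\<^sub>R a \<in> ?M1" "\<bar>c\<bar> *\<^sub>R b \<in> ?M2"
        using MF1_scale[OF ol os bA ab(2) _ `\<bar>c\<bar> \<le> 1`] MF2_scale[OF ol os bA ab(3) _ `\<bar>c\<bar> \<le> 1`] by auto
      then have "- (\<bar>c\<bar> *\<^sub>R b) \<in> ?M1" "- (\<bar>c\<bar> *\<^sub>R a) \<in> ?M2" using n1 n2 by auto
      moreover have "c *\<^sub>R y = - (\<bar>c\<bar> *\<^sub>R b) + - (\<bar>c\<bar> *\<^sub>R a)"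
      proof -
        have "\<bar>c\<bar> = - c" using False by simp
        then show ?thesis unfolding ab(1) by (simp add: scaleR_right_distrib)
      qed
      ultimately show ?thesis unfolding setsum_def by blast
    qed
  qed
  show "absorbing ?B" using aA AB unfolding absorbing_def by blast
  show "x \<in> ?B" if "y \<in> ?B \<and> le 0 x \<and> sle x y" for x y
  proof -
    from that obtain a b where ab: "y = a + b" "a \<in> ?M1" "b \<in> ?M2" unfolding setsum_def by blast
    from ab(2) obtain p q where pq: "p \<in> A" "q \<in> A" "sle p a" "le a q" unfolding MF1_def by blast
    from ab(3) obtain r s where rs: "r \<in> A" "s \<in> A" "le r b" "sle b s" unfolding MF2_def by blast
    have "le 0 x" using that by simp
    have "le (0 + a) (x + q)" using ovs_add[OF ol `le 0 x` pq(4)] .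
    then have "le (0 + a + (-a-q)) (x + q + (-a-q))" by (rule ovs_addr[OF ol])
    then have 1: "le (-q) (x - a)" by (simp add: algebra_simps)
    have "sle x y" using that by simp
    have "sle (x + -a) (y + -a)" using ovs_addr[OF os `sle x y`] .
    then have "sle (x - a) b" using ab(1) by (simp add: algebra_simps)
    then have 2: "sle (x - a) s" using ovs_trans[OF os _ rs(4)] by blast
    have "x - a \<in> ?M2" unfolding MF2_def using 1 2 bal_neg[OF bA pq(2)] rs(2) by blast
    moreover have "x = a + (x - a)" by simp
    ultimately show ?thesis unfolding setsum_def using ab(2) by blast
  qed
  show "x \<in> ?B" if "y \<in> ?B \<and> sle 0 x \<and> le x y" for x y
  proof -
    from that obtain a b where ab: "y = a + b" "a \<in> ?M1" "b \<in> ?M2" unfolding setsum_def by blast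
    from ab(2) obtain p q where pq: "p \<in> A" "q \<in> A" "sle p a" "le a q" unfolding MF1_def by blast
    from ab(3) obtain r s where rs: "r \<in> A" "s \<in> A" "le r b" "sle b s" unfolding MF2_def by blast
    have "sle 0 x" using that by simp
    have "sle (0 + b) (x + s)" using ovs_add[OF os `sle 0 x` rs(4)] .
    then have "sle (0 + b + (-b-s)) (x + s + (-b-s))" by (rule ovs_addr[OF os])
    then have 1: "sle (-s) (x - b)" by (simp add: algebra_simps)
    have "le x y" using that by simp
    have "le (x + -b) (y + -b)" using ovs_addr[OF ol `le x y`] .
    then have "le (x - b) a" using ab(1) by (simp add: algebra_simps)
    then have 2: "le (x - b) q" using ovs_trans[OF ol _ pq(4)] by blast
    have "x - b \<in> ?M1" unfolding MF1_def using 1 2 bal_neg[OF bA rs(2)] pq(2) by blast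
    moreover have "x = (x - b) + b" by simp
    ultimately show ?thesis unfolding setsum_def using ab(3) by blast
  qed
  assume cA: "convex A"
  show "convex ?M1" using MF1_convex[OF ol os cA] .
  show "convex ?M2" using MF2_convex[OF ol os cA] .
  show "convex ?B" using setsum_convex[OF MF1_convex[OF ol os cA] MF2_convex[OF ol os cA]] .
qed



lemma vt_top: "vector_topology T \<Longrightarrow> topspace T = UNIV"
  unfolding vector_topology_def by (erule conjE)
lemma vt_add: "vector_topology T \<Longrightarrow> continuous_map (prod_topology T T) T (\<lambda>(x, y). x + y)"
  unfolding vector_topology_def by (elim conjE)
lemma vt_smul: "vector_topology T \<Longrightarrow> continuous_map (prod_topology (euclidean :: real topology) T) T (\<lambda>(c, x). c *\<^sub>R x)"
  unfolding vector_topology_def by (elim conjE)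

lemma vt_smul1: assumes "vector_topology T" shows "continuous_map T T (\<lambda>x. r *\<^sub>R x)"
proof -
  have c1: "continuous_map T (prod_topology euclidean T) (\<lambda>x. (r, x))"
    by (intro continuous_map_pairedI) (simp_all add: continuous_map_id)
  have c2: "continuous_map (prod_topology (euclidean :: real topology) T) T (\<lambda>(c, x). c *\<^sub>R x)"
    using assms by (rule vt_smul)
  have "continuous_map T T ((\<lambda>(c, x). c *\<^sub>R x) \<circ> (\<lambda>x. (r, x)))"
    using continuous_map_compose[OF c1 c2] .
  then show ?thesis by (simp add: o_def)
qed

lemma vt_smul2: assumes "vector_topology T" shows "continuous_map euclidean T (\<lambda>c. c *\<^sub>R x)"
proof -
  have tp: "topspace T = UNIV" using assms by (rule vt_top)
  have c1: "continuous_map euclidean (prod_topology euclidean T) (\<lambda>c::real. (c, x))"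
    by (intro continuous_map_pairedI) (simp_all add: continuous_map_id tp)
  have c2: "continuous_map (prod_topology (euclidean :: real topology) T) T (\<lambda>(c, x). c *\<^sub>R x)"
    using assms by (rule vt_smul)
  have "continuous_map euclidean T ((\<lambda>(c, x). c *\<^sub>R x) \<circ> (\<lambda>c. (c, x)))"
    using continuous_map_compose[OF c1 c2] .
  then show ?thesis by (simp add: o_def)
qed

lemma nhd0_absorbing: assumes "vector_topology T" "nhd0 T S" shows "absorbing S"
  unfolding absorbing_def
proof
  fix x
  obtain U where U: "openin T U" "0 \<in> U" "U \<subseteq> S" using assms(2) unfolding nhd0_def by blast
  have "openin euclidean {c \<in> topspace euclidean. c *\<^sub>R x \<in> U}"
    using openin_continuous_map_preimage[OF vt_smul2[OF assms(1)] U(1)] .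
  then have "open {c::real. c *\<^sub>R x \<in> U}" by simp
  moreover have "(0::real) \<in> {c::real. c *\<^sub>R x \<in> U}" using U by simp
  ultimately obtain e where e: "e > 0" "ball 0 e \<subseteq> {c::real. c *\<^sub>R x \<in> U}"
    using open_contains_ball by blast
  show "\<exists>t>0. \<forall>c::real. \<bar>c\<bar> \<le> t \<longrightarrow> c *\<^sub>R x \<in> S"
  proof (intro exI[of _ "e/2"] conjI allI impI)
    show "e/2 > 0" using e by simp
    fix c :: real assume "\<bar>c\<bar> \<le> e/2"
    then have "c \<in> ball 0 e" using e by (simp add: dist_real_def)
    then show "c *\<^sub>R x \<in> S" using e U by blast
  qed
qed

lemma nhd0_add: assumes "vector_topology T" "openin T U" "0 \<in> U"
  shows "\<exists>V. openin T V \<and> 0 \<in> V \<and> (\<forall>x\<in>V. \<forall>y\<in>V. x + y \<in> U)"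
proof -
  have tp: "topspace T = UNIV" using assms(1) by (rule vt_top)
  have c: "continuous_map (prod_topology T T) T (\<lambda>(x, y). x + y)"
    using assms(1) by (rule vt_add)
  define P where "P = {z \<in> topspace (prod_topology T T). (\<lambda>(x, y). x + y) z \<in> U}"
  have op: "openin (prod_topology T T) P"
    unfolding P_def using openin_continuous_map_preimage[OF c assms(2)] .
  have mem: "(0, 0) \<in> P" unfolding P_def using assms(3) tp by simp
  obtain U1 V1 where h: "openin T U1" "openin T V1" "0 \<in> U1" "0 \<in> V1" "U1 \<times> V1 \<subseteq> P"
    using op[unfolded openin_prod_topology_alt, rule_format, OF mem] by (elim exE conjE)
  show ?thesis
  proof (intro exI[of _ "U1 \<inter> V1"] conjI ballI)
    show "openin T (U1 \<inter> V1)" using h(1,2) by (rule openin_Int)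
    show "0 \<in> U1 \<inter> V1" using h(3,4) by (rule IntI)
    fix x y assume "x \<in> U1 \<inter> V1" "y \<in> U1 \<inter> V1"
    then have "(x, y) \<in> U1 \<times> V1" by simp
    then have "(x, y) \<in> P" using h(5) by (rule subsetD[rotated])
    then show "x + y \<in> U" unfolding P_def by simp
  qed
qed

definition bal :: "'a::real_vector set \<Rightarrow> 'a set" where
  "bal M = {x. \<forall>c::real. \<bar>c\<bar> \<le> 1 \<longrightarrow> c *\<^sub>R x \<in> M}"

lemma bal_mem: "x \<in> bal M \<Longrightarrow> \<bar>c\<bar> \<le> 1 \<Longrightarrow> c *\<^sub>R x \<in> M"
  unfolding bal_def by blast

lemma bal_sub: "bal M \<subseteq> M"
proof
  fix x assume "x \<in> bal M"
  from bal_mem[OF this, of 1] show "x \<in> M" by simp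
qed

lemma bal_neg_in: "x \<in> bal M \<Longrightarrow> -x \<in> M"
  using bal_mem[of x M "-1"] by simp

lemma bal_balanced: "balanced (bal M)"
  unfolding balanced_def
proof (intro ballI allI impI)
  fix x and c :: real
  assume x: "x \<in> bal M" and c: "\<bar>c\<bar> \<le> 1"
  show "c *\<^sub>R x \<in> bal M" unfolding bal_def
  proof (intro CollectI allI impI)
    fix c' :: real assume c': "\<bar>c'\<bar> \<le> 1"
    have "\<bar>c' * c\<bar> \<le> 1" using c c' by (simp add: abs_mult mult_le_one)
    from bal_mem[OF x this] show "c' *\<^sub>R c *\<^sub>R x \<in> M" by simp
  qed
qed

lemma bal_convex: assumes "convex M" shows "convex (bal M)"
  unfolding convex_def
proof (intro ballI allI impI)
  fix x y and u v :: real
  assume h: "x \<in> bal M" "y \<in> bal M" "0 \<le> u" "0 \<le> v" "u + v = 1"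
  show "u *\<^sub>R x + v *\<^sub>R y \<in> bal M" unfolding bal_def
  proof (intro CollectI allI impI)
    fix c :: real assume "\<bar>c\<bar> \<le> 1"
    then have "c *\<^sub>R x \<in> M" "c *\<^sub>R y \<in> M" using h unfolding bal_def by auto
    then have "u *\<^sub>R (c *\<^sub>R x) + v *\<^sub>R (c *\<^sub>R y) \<in> M" using assms h unfolding convex_def by blast
    then show "c *\<^sub>R (u *\<^sub>R x + v *\<^sub>R y) \<in> M" by (simp add: algebra_simps)
  qed
qed

lemma nhd0_mono: "nhd0 T A \<Longrightarrow> A \<subseteq> B \<Longrightarrow> nhd0 T B"
  unfolding nhd0_def by blast

lemma nhd0_bal: assumes vt: "vector_topology T" and M: "nhd0 T M" shows "nhd0 T (bal M)"
proof -
  have tp: "topspace T = UNIV" using vt by (rule vt_top)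
  obtain U where U: "openin T U" "0 \<in> U" "U \<subseteq> M" using M unfolding nhd0_def by blast
  have c: "continuous_map (prod_topology (euclidean :: real topology) T) T (\<lambda>(c, x). c *\<^sub>R x)"
    using vt by (rule vt_smul)
  define P where "P = {z \<in> topspace (prod_topology (euclidean::real topology) T). (\<lambda>(c, x). c *\<^sub>R x) z \<in> U}"
  have op: "openin (prod_topology euclidean T) P"
    unfolding P_def using openin_continuous_map_preimage[OF c U(1)] .
  have mem: "((0::real), 0) \<in> P" unfolding P_def using U tp by simp
  obtain S V where h: "openin euclidean S" "openin T V" "(0::real) \<in> S" "0 \<in> V" "S \<times> V \<subseteq> P"
    using op[unfolded openin_prod_topology_alt, rule_format, OF mem] by (elim exE conjE)
  have "open S" using h(1) by simp
  then obtain e where e: "e > 0" "ball 0 e \<subseteq> S" using h(3) open_contains_ball by blast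
  define d where "d = e / 2"
  have d: "d > 0" "d < e" using e unfolding d_def by auto
  define Wd where "Wd = {x \<in> topspace T. (1/d) *\<^sub>R x \<in> V}"
  have "openin T Wd" unfolding Wd_def using openin_continuous_map_preimage[OF vt_smul1[OF vt] h(2)] .
  moreover have "0 \<in> Wd" unfolding Wd_def using h(4) tp by simp
  moreover have "Wd \<subseteq> bal M"
  proof
    fix x assume "x \<in> Wd"
    then have xv: "(1/d) *\<^sub>R x \<in> V" unfolding Wd_def by simp
    show "x \<in> bal M" unfolding bal_def
    proof (intro CollectI allI impI)
      fix c :: real assume c1: "\<bar>c\<bar> \<le> 1"
      have "\<bar>c * d\<bar> = \<bar>c\<bar> * d" using d by (simp add: abs_mult)
      also have "\<dots> \<le> d" using c1 d by (simp add: mult_left_le_one_le)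
      finally have "\<bar>c * d\<bar> < e" using d by linarith
      then have "c * d \<in> ball 0 e" by (simp add: dist_real_def)
      then have "c * d \<in> S" using e(2) by (rule subsetD[rotated])
      then have "(c * d, (1/d) *\<^sub>R x) \<in> S \<times> V" using xv by simp
      then have "(c * d, (1/d) *\<^sub>R x) \<in> P" using h(5) by (rule subsetD[rotated])
      then have "(c * d) *\<^sub>R ((1/d) *\<^sub>R x) \<in> U" unfolding P_def by simp
      moreover have "(c * d) *\<^sub>R ((1/d) *\<^sub>R x) = c *\<^sub>R x" using d by simp
      ultimately show "c *\<^sub>R x \<in> M" using U(3) by auto
    qed
  qed
  ultimately show ?thesis unfolding nhd0_def by blast
qed

lemma partB_gen:
  assumes ol: "ordered_vs le" and os: "ordered_vs sle" and vt: "vector_topology T"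
    and lmf: "locally_mixed_full le sle T" and N: "nhd0 T N"
    and sel: "\<And>M. nhd0 T M \<Longrightarrow> \<exists>A. nhd0 T A \<and> A \<subseteq> M \<and> balanced A \<and> Q A"
  shows "\<exists>A. nhd0 T A \<and> balanced A \<and> Q A \<and> setsum (MF1 le sle A) (MF2 le sle A) \<subseteq> N
            \<and> nhd0 T (setsum (MF1 le sle A) (MF2 le sle A))"
proof -
  obtain U0 where U0: "openin T U0" "0 \<in> U0" "U0 \<subseteq> N" using N unfolding nhd0_def by blast
  obtain U1 where U1: "openin T U1" "0 \<in> U1" "\<forall>x\<in>U1. \<forall>y\<in>U1. x + y \<in> U0"
    using nhd0_add[OF vt U0(1,2)] by blast
  obtain U2 where U2: "openin T U2" "0 \<in> U2" "\<forall>x\<in>U2. \<forall>y\<in>U2. x + y \<in> U1"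
    using nhd0_add[OF vt U1(1,2)] by blast
  have "nhd0 T U2" unfolding nhd0_def using U2(1,2) by blast
  then have "nhd0 T (bal U2)" using nhd0_bal[OF vt] by blast
  then obtain W where W: "nhd0 T W" "W \<subseteq> bal U2" and mf: "\<forall>x y. y \<in> W \<and> sle 0 x \<and> le x y \<longrightarrow> x \<in> W"
    using lmf unfolding locally_mixed_full_def by blast
  obtain W0 where W0: "openin T W0" "0 \<in> W0" "W0 \<subseteq> W" using W(1) unfolding nhd0_def by blast
  obtain W1 where W1: "openin T W1" "0 \<in> W1" "\<forall>x\<in>W1. \<forall>y\<in>W1. x + y \<in> W0"
    using nhd0_add[OF vt W0(1,2)] by blast
  have W1W0: "W1 \<subseteq> W0"
  proof
    fix x assume "x \<in> W1"
    then have "x + 0 \<in> W0" using W1 by blast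
    then show "x \<in> W0" by simp
  qed
  have "nhd0 T W1" unfolding nhd0_def using W1(1,2) by blast
  then obtain A where A: "nhd0 T A" "A \<subseteq> W1" "balanced A" "Q A" using sel by blast
  have AU2: "\<And>p. p \<in> A \<Longrightarrow> p \<in> bal U2" using A(2) W1W0 W0(3) W(2) by blast
  have AW: "\<And>p q. p \<in> A \<Longrightarrow> q \<in> A \<Longrightarrow> q - p \<in> W"
  proof -
    fix p q assume "p \<in> A" "q \<in> A"
    then have "-p \<in> W1" "q \<in> W1" using bal_neg[OF A(3)] A(2) by auto
    then have "q + -p \<in> W0" using W1(3) by blast
    then show "q - p \<in> W" using W0(3) by auto
  qed
  have key1: "\<And>y. y \<in> MF1 le sle A \<Longrightarrow> y \<in> U1"
  proof -
    fix y assume "y \<in> MF1 le sle A"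
    then obtain p q where pq: "p \<in> A" "q \<in> A" "sle p y" "le y q" unfolding MF1_def by blast
    have "sle (p + -p) (y + -p)" using ovs_addr[OF os pq(3)] .
    then have s1: "sle 0 (y - p)" by simp
    have "le (y + -p) (q + -p)" using ovs_addr[OF ol pq(4)] .
    then have s2: "le (y - p) (q - p)" by simp
    have "q - p \<in> W" using AW[OF pq(1,2)] .
    then have "y - p \<in> W" using mf s1 s2 by blast
    then have "y - p \<in> bal U2" using W(2) by blast
    then have a1: "y - p \<in> U2" using bal_sub by blast
    have a2: "p \<in> U2" using AU2[OF pq(1)] bal_sub by blast
    have "p + (y - p) \<in> U1" using U2(3) a1 a2 by blast
    then show "y \<in> U1" by simp
  qed
  have key2: "\<And>z. z \<in> MF2 le sle A \<Longrightarrow> z \<in> U1"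
  proof -
    fix z assume "z \<in> MF2 le sle A"
    then have "-z \<in> MF1 le sle A" using MF2_neg[OF ol os A(3)] by blast
    then obtain r s where rs: "r \<in> A" "s \<in> A" "sle r (-z)" "le (-z) s" unfolding MF1_def by blast
    have "sle (r + -r) (-z + -r)" using ovs_addr[OF os rs(3)] .
    then have s1: "sle 0 (-z - r)" by simp
    have "le (-z + -r) (s + -r)" using ovs_addr[OF ol rs(4)] .
    then have s2: "le (-z - r) (s - r)" by simp
    have "s - r \<in> W" using AW[OF rs(1,2)] .
    then have "-z - r \<in> W" using mf s1 s2 by blast
    then have "-z - r \<in> bal U2" using W(2) by blast
    then have a1: "-(-z - r) \<in> U2" using bal_neg_in by blast
    have a2: "-r \<in> U2" using AU2[OF rs(1)] bal_neg_in by blast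
    have "-r + -(-z - r) \<in> U1" using U2(3) a1 a2 by blast
    then show "z \<in> U1" by simp
  qed
  have sub: "setsum (MF1 le sle A) (MF2 le sle A) \<subseteq> N"
  proof
    fix w assume "w \<in> setsum (MF1 le sle A) (MF2 le sle A)"
    then obtain a b where ab: "w = a + b" "a \<in> MF1 le sle A" "b \<in> MF2 le sle A"
      unfolding setsum_def by blast
    have "a + b \<in> U0" using U1(3) key1[OF ab(2)] key2[OF ab(3)] by blast
    then show "w \<in> N" using ab(1) U0(3) by blast
  qed
  have zA: "0 \<in> A" using A(1) unfolding nhd0_def by blast
  have AM1: "A \<subseteq> MF1 le sle A" unfolding MF1_def using ovs_refl[OF ol] ovs_refl[OF os] by auto
  have zM2: "0 \<in> MF2 le sle A" unfolding MF2_def using zA ovs_refl[OF ol, of 0] ovs_refl[OF os, of 0] by auto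
  have AB: "A \<subseteq> setsum (MF1 le sle A) (MF2 le sle A)"
  proof
    fix a assume "a \<in> A"
    then have "a \<in> MF1 le sle A" using AM1 by blast
    moreover have "a = a + 0" by simp
    ultimately show "a \<in> setsum (MF1 le sle A) (MF2 le sle A)" unfolding setsum_def using zM2 by blast
  qed
  show ?thesis using A sub nhd0_mono[OF A(1) AB] by blast
qed

lemma partB_final:
  assumes ol: "ordered_vs le" and os: "ordered_vs sle" and vt: "vector_topology T"
    and lmf: "locally_mixed_full le sle T" and N: "nhd0 T N"
    and sel: "\<And>M. nhd0 T M \<Longrightarrow> \<exists>A. nhd0 T A \<and> A \<subseteq> M \<and> balanced A \<and> Q A"
    and QR: "\<And>A. Q A \<Longrightarrow> R (setsum (MF1 le sle A) (MF2 le sle A))"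
  shows "\<exists>W. nhd0 T W \<and> W \<subseteq> N \<and> balanced W \<and> absorbing W \<and> R W \<and>
                (\<forall>x y. y \<in> W \<and> le 0 x \<and> sle x y \<longrightarrow> x \<in> W) \<and>
                (\<forall>x y. y \<in> W \<and> sle 0 x \<and> le x y \<longrightarrow> x \<in> W)"
proof -
  obtain A where A: "nhd0 T A" "balanced A" "Q A" "setsum (MF1 le sle A) (MF2 le sle A) \<subseteq> N"
    "nhd0 T (setsum (MF1 le sle A) (MF2 le sle A))"
    using partB_gen[OF ol os vt lmf N sel] by blast
  have aA: "absorbing A" using nhd0_absorbing[OF vt A(1)] .
  note P = partA[OF ol os A(2) aA]
  show ?thesis
    apply (rule exI[of _ "setsum (MF1 le sle A) (MF2 le sle A)"])
    using A(4,5) QR[OF A(3)] P by blast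
qed

theorem proposition3p8:
  fixes le sle :: "'a::real_vector \<Rightarrow> 'a \<Rightarrow> bool" and T :: "'a topology"
  assumes "top_mixed_lattice_space le sle T"
  shows "(\<forall>A. balanced A \<and> absorbing A \<longrightarrow>
            MF1 le sle A = uminus ` MF2 le sle A \<and>
            balanced (setsum (MF1 le sle A) (MF2 le sle A)) \<and>
            absorbing (setsum (MF1 le sle A) (MF2 le sle A)) \<and>
            (\<forall>x y. y \<in> setsum (MF1 le sle A) (MF2 le sle A) \<and> le 0 x \<and> sle x y
                   \<longrightarrow> x \<in> setsum (MF1 le sle A) (MF2 le sle A)) \<and>
            (\<forall>x y. y \<in> setsum (MF1 le sle A) (MF2 le sle A) \<and> sle 0 x \<and> le x y
                   \<longrightarrow> x \<in> setsum (MF1 le sle A) (MF2 le sle A)) \<and>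
            (convex A \<longrightarrow> convex (MF1 le sle A) \<and> convex (MF2 le sle A) \<and>
                          convex (setsum (MF1 le sle A) (MF2 le sle A))))
       \<and>
         (locally_mixed_full le sle T \<longrightarrow>
            (\<forall>N. nhd0 T N \<longrightarrow> (\<exists>W. nhd0 T W \<and> W \<subseteq> N \<and> balanced W \<and> absorbing W \<and>
                (\<forall>x y. y \<in> W \<and> le 0 x \<and> sle x y \<longrightarrow> x \<in> W) \<and>
                (\<forall>x y. y \<in> W \<and> sle 0 x \<and> le x y \<longrightarrow> x \<in> W))) \<and>
            (locally_convex_top T \<longrightarrow>
              (\<forall>N. nhd0 T N \<longrightarrow> (\<exists>W. nhd0 T W \<and> W \<subseteq> N \<and> balanced W \<and> absorbing W \<and>
                convex W \<and>
                (\<forall>x y. y \<in> W \<and> le 0 x \<and> sle x y \<longrightarrow> x \<in> W) \<and>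
                (\<forall>x y. y \<in> W \<and> sle 0 x \<and> le x y \<longrightarrow> x \<in> W)))))"
proof -
  have ml: "mixed_lattice_vs le sle"
    using assms unfolding top_mixed_lattice_space_def by (elim conjE)
  have vt: "vector_topology T"
    using assms unfolding top_mixed_lattice_space_def by (elim conjE)
  have ol: "ordered_vs le"
    using ml unfolding mixed_lattice_vs_def by (elim conjE)
  have os: "ordered_vs sle"
    using ml unfolding mixed_lattice_vs_def by (elim conjE)
  show ?thesis
    apply (rule conjI)
    subgoal by (intro allI impI, elim conjE, rule partA[OF ol os])
    apply (rule impI, rule conjI)
    subgoal premises lmf
      apply (intro allI impI)
      subgoal premises N for N
      proof -
        have "\<exists>W. nhd0 T W \<and> W \<subseteq> N \<and> balanced W \<and> absorbing W \<and> True \<and>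
                (\<forall>x y. y \<in> W \<and> le 0 x \<and> sle x y \<longrightarrow> x \<in> W) \<and>
                (\<forall>x y. y \<in> W \<and> sle 0 x \<and> le x y \<longrightarrow> x \<in> W)"
        proof (rule partB_final[OF ol os vt lmf N, where Q = "\<lambda>_. True"])
          fix M assume "nhd0 T M"
          then show "\<exists>A. nhd0 T A \<and> A \<subseteq> M \<and> balanced A \<and> True"
            using nhd0_bal[OF vt] bal_sub bal_balanced by blast
        qed simp
        then show ?thesis by simp
      qed
      done
    apply (intro impI allI)
    subgoal premises p for N
    proof -
      have lmf: "locally_mixed_full le sle T" and lc: "locally_convex_top T" and N: "nhd0 T N"
        using p by auto
      show ?thesis
      proof (rule partB_final[OF ol os vt lmf N, where Q = convex])
        fix M assume "nhd0 T M"
        then obtain C where C: "nhd0 T C" "C \<subseteq> M" "convex C"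
          using lc unfolding locally_convex_top_def by blast
        show "\<exists>A. nhd0 T A \<and> A \<subseteq> M \<and> balanced A \<and> convex A"
          apply (rule exI[of _ "bal C"])
          using nhd0_bal[OF vt C(1)] bal_sub[of C] C(2) bal_balanced[of C] bal_convex[OF C(3)] by blast
      next
        fix A :: "'a set" assume "convex A"
        then show "convex (setsum (MF1 le sle A) (MF2 le sle A))"
          using setsum_convex[OF MF1_convex[OF ol os] MF2_convex[OF ol os]] by blast
      qed
    qed
    done
qed

end
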